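(* Let $p\ge5$, $n\ge 0$, and let $\mu<\nu$ be two integers in $\{M_{n-1}+1,\dots,M_n\}$ whose metallic codes both end with the digit $0$, such that no integer strictly between $\mu$ and $\nu$ has a metallic code ending with $0$. Then $\nu-\mu=p-3$ if and only if the metallic code of $\nu$ ends with at least two zeros (i.e. is of the form $w\,0^k$ with $k\ge 2$); otherwise $\nu-\mu=p-2$.
   Context: $p\ge5$ is a fixed integer. Metallic numbers: $m_{-1}=0$, $m_0=1$, $m_{n+2}=(p-2)m_{n+1}-m_n$; $M_n=\sum_{k=0}^n m_k$ and $M_{-1}=0$. Write $d=p-3$, $c=p-4$. The metallic code of a positive integer $n$ is the unique word $a_k\cdots a_0$ over the digits $\{0,\dots,p-3\}$ with $a_k\neq 0$, $n=\sum_i a_i m_i$, and containing no factor $d\,c^j\,d$ ($j\ge0$). (The set $\{M_{n-1}+1,\dots,M_n\}$ is the level $n$ of the white metallic tree.) *)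

theory Defs
  imports Main
begin

text \<open>Metallic numbers m_0 = 1, m_1 = (p-2) m_0 - m_{-1} = p - 2,
  m_{n+2} = (p-2) m_{n+1} - m_n  (computed in int, so no truncation).\<close>
fun metallic :: "nat \<Rightarrow> nat \<Rightarrow> int" where
  "metallic p 0 = 1"
| "metallic p (Suc 0) = int p - 2"
| "metallic p (Suc (Suc n)) = (int p - 2) * metallic p (Suc n) - metallic p n"

text \<open>Mprev p k = M_{k-1} = sum_{i<k} m_i; so M_{-1} = Mprev p 0 = 0.\<close>
definition Mprev :: "nat \<Rightarrow> nat \<Rightarrow> int" where
  "Mprev p k = (\<Sum>i<k. metallic p i)"

definition level :: "nat \<Rightarrow> nat \<Rightarrow> int set" where
  "level p n = {Mprev p n + 1 .. Mprev p (Suc n)}"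

text \<open>Words are stored little-endian: ds ! i is the digit a_i, so the last
  list element is the leading digit a_k.\<close>
definition word_value :: "nat \<Rightarrow> nat list \<Rightarrow> int" where
  "word_value p ds = (\<Sum>i<length ds. int (ds ! i) * metallic p i)"

text \<open>Contains a factor d c^j d with d = p-3, c = p-4, j \<ge> 0
  (the pattern is a palindrome, so the reading direction is irrelevant).\<close>
definition has_forbidden_factor :: "nat \<Rightarrow> nat list \<Rightarrow> bool" where
  "has_forbidden_factor p ds \<longleftrightarrow>
     (\<exists>i j. i + j + 1 < length ds \<and> ds ! i = p - 3 \<and> ds ! (i + j + 1) = p - 3 \<and>
        (\<forall>t. i < t \<and> t < i + j + 1 \<longrightarrow> ds ! t = p - 4))"

definition is_metallic_code :: "nat \<Rightarrow> nat list \<Rightarrow> bool" where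
  "is_metallic_code p ds \<longleftrightarrow>
     ds \<noteq> [] \<and> last ds \<noteq> 0 \<and> (\<forall>x\<in>set ds. x \<le> p - 3) \<and>
     \<not> has_forbidden_factor p ds"

definition metallic_code :: "nat \<Rightarrow> int \<Rightarrow> nat list" where
  "metallic_code p n = (THE ds. is_metallic_code p ds \<and> word_value p ds = n)"

definition code_ends_with_0 :: "nat \<Rightarrow> int \<Rightarrow> bool" where
  "code_ends_with_0 p n \<longleftrightarrow> (let ds = metallic_code p n in ds \<noteq> [] \<and> ds ! 0 = 0)"

definition code_ends_with_00 :: "nat \<Rightarrow> int \<Rightarrow> bool" where
  "code_ends_with_00 p n \<longleftrightarrow>
     (let ds = metallic_code p n in 2 \<le> length ds \<and> ds ! 0 = 0 \<and> ds ! 1 = 0)"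

end

theory Submission
  imports Defs
begin

definition ff :: "nat \<Rightarrow> nat list \<Rightarrow> bool" where
  "ff p ds \<longleftrightarrow> (\<exists>u j v. ds = u @ [p-3] @ replicate j (p-4) @ [p-3] @ v)"

definition scd :: "nat \<Rightarrow> nat list \<Rightarrow> bool" where
  "scd p xs \<longleftrightarrow> (\<exists>j v. xs = replicate j (p-4) @ (p-3) # v)"

lemma scd_Nil[simp]: "\<not> scd p []"
  by (simp add: scd_def)

lemma scd_Cons[simp]: "p \<ge> 5 \<Longrightarrow> scd p (x # xs) \<longleftrightarrow> x = p-3 \<or> (x = p-4 \<and> scd p xs)"
proof
  assume p: "p \<ge> 5" and "scd p (x # xs)"
  then obtain j v where e: "x # xs = replicate j (p-4) @ (p-3) # v" by (auto simp: scd_def)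
  show "x = p-3 \<or> (x = p-4 \<and> scd p xs)"
  proof (cases j)
    case 0 then show ?thesis using e by simp
  next
    case (Suc i) then show ?thesis using e by (auto simp: scd_def)
  qed
next
  assume "x = p-3 \<or> (x = p-4 \<and> scd p xs)"
  then show "scd p (x # xs)"
  proof
    assume "x = p-3" then show ?thesis unfolding scd_def by (intro exI[of _ 0] exI[of _ xs]) auto
  next
    assume "x = p-4 \<and> scd p xs"
    then obtain j v where "x = p-4" "xs = replicate j (p-4) @ (p-3) # v" by (auto simp: scd_def)
    then show ?thesis unfolding scd_def by (intro exI[of _ "Suc j"] exI[of _ v]) simp
  qed
qed

lemma ff_Nil[simp]: "\<not> ff p []"
  by (simp add: ff_def)

lemma ff_Cons: "ff p (x # xs) \<longleftrightarrow> ff p xs \<or> (x = p-3 \<and> scd p xs)"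
proof
  assume "ff p (x # xs)"
  then obtain u j v where e: "x # xs = u @ [p-3] @ replicate j (p-4) @ [p-3] @ v" by (auto simp: ff_def)
  show "ff p xs \<or> (x = p-3 \<and> scd p xs)"
  proof (cases u)
    case Nil then show ?thesis using e by (auto simp: scd_def)
  next
    case (Cons y u') then show ?thesis using e unfolding ff_def by auto
  qed
next
  assume "ff p xs \<or> (x = p-3 \<and> scd p xs)"
  then show "ff p (x # xs)"
  proof
    assume "ff p xs"
    then obtain u j v where "xs = u @ [p-3] @ replicate j (p-4) @ [p-3] @ v" by (auto simp: ff_def)
    then show ?thesis unfolding ff_def by (intro exI[of _ "x # u"]) auto
  next
    assume "x = p-3 \<and> scd p xs"
    then obtain j v where "x = p-3" "xs = replicate j (p-4) @ (p-3) # v" by (auto simp: scd_def)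
    then show ?thesis unfolding ff_def by (intro exI[of _ "[]"]) auto
  qed
qed

lemma ff_snoc: "ff p (xs @ [x]) \<longleftrightarrow> ff p xs \<or> (x = p-3 \<and> scd p (rev xs))"
proof
  assume "ff p (xs @ [x])"
  then obtain u j v where e: "xs @ [x] = u @ [p-3] @ replicate j (p-4) @ [p-3] @ v" by (auto simp: ff_def)
  show "ff p xs \<or> (x = p-3 \<and> scd p (rev xs))"
  proof (cases v rule: rev_exhaust)
    case Nil
    then have "xs = u @ [p-3] @ replicate j (p-4)" "x = p-3" using e by auto
    then have "rev xs = replicate j (p-4) @ (p-3) # rev u" "x = p-3" by auto
    then show ?thesis by (auto simp: scd_def)
  next
    case (snoc v' y)
    then have "xs = u @ [p-3] @ replicate j (p-4) @ [p-3] @ v'" using e by auto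
    then show ?thesis unfolding ff_def by blast
  qed
next
  assume "ff p xs \<or> (x = p-3 \<and> scd p (rev xs))"
  then show "ff p (xs @ [x])"
  proof
    assume "ff p xs"
    then obtain u j v where "xs = u @ [p-3] @ replicate j (p-4) @ [p-3] @ v" by (auto simp: ff_def)
    then show ?thesis unfolding ff_def by (intro exI[of _ u] exI[of _ j] exI[of _ "v @ [x]"]) auto
  next
    assume "x = p-3 \<and> scd p (rev xs)"
    then obtain j v where "x = p-3" "rev xs = replicate j (p-4) @ (p-3) # v" by (auto simp: scd_def)
    then have "xs = rev v @ [p-3] @ replicate j (p-4)" "x = p-3"
      by (metis append.assoc append_Cons append_Nil rev_append rev_replicate rev.simps rev_rev_ident)+
    then show ?thesis unfolding ff_def by (intro exI[of _ "rev v"] exI[of _ j] exI[of _ "[]"]) auto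
  qed
qed

lemma ff_snoc2: "ff p (xs @ [a, b]) \<longleftrightarrow> ff p (xs @ [a]) \<or> (b = p-3 \<and> scd p (a # rev xs))"
  using ff_snoc[of p "xs @ [a]" b] by simp

lemma ff_app_left: "ff p ys \<Longrightarrow> ff p (xs @ ys)"
  unfolding ff_def by (metis append.assoc)

lemma ff_app_right: "ff p xs \<Longrightarrow> ff p (xs @ ys)"
  unfolding ff_def by (metis append.assoc)

lemma ff_rep0: "p \<ge> 5 \<Longrightarrow> ff p (replicate n 0 @ ys) \<longleftrightarrow> ff p ys"
  by (induction n) (auto simp: ff_Cons)

lemma hff_ff: "has_forbidden_factor p ds \<longleftrightarrow> ff p ds"
proof
  assume "has_forbidden_factor p ds"
  then obtain i j where h: "i + j + 1 < length ds" "ds ! i = p - 3" "ds ! (i + j + 1) = p - 3"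
    "\<forall>t. i < t \<and> t < i + j + 1 \<longrightarrow> ds ! t = p - 4"
    unfolding has_forbidden_factor_def by blast
  have r: "take j (drop (Suc i) ds) = replicate j (p-4)"
  proof -
    have "\<forall>y\<in>set (take j (drop (Suc i) ds)). y = p-4"
    proof
      fix y assume "y \<in> set (take j (drop (Suc i) ds))"
      then obtain k where k: "k < length (take j (drop (Suc i) ds))" "y = take j (drop (Suc i) ds) ! k"
        by (auto simp: in_set_conv_nth)
      then have "y = ds ! (Suc i + k)" "k < j" using h(1) by auto
      then show "y = p-4" using h(4) by auto
    qed
    moreover have "length (take j (drop (Suc i) ds)) = j" using h(1) by auto
    ultimately show ?thesis by (metis replicate_length_same)
  qed
  have d1: "drop i ds = ds ! i # drop (Suc i) ds" using h(1) by (simp add: Cons_nth_drop_Suc)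
  have d2: "drop (Suc i) ds = take j (drop (Suc i) ds) @ drop j (drop (Suc i) ds)" by (rule append_take_drop_id[symmetric])
  have d3: "drop j (drop (Suc i) ds) = ds ! (i + j + 1) # drop (Suc (i + j + 1)) ds"
    using h(1) by (simp add: Cons_nth_drop_Suc add.commute)
  have "ds = take i ds @ drop i ds" by simp
  also have "\<dots> = take i ds @ [p-3] @ replicate j (p-4) @ [p-3] @ drop (Suc (i + j + 1)) ds"
    using d1 d2 d3 r h(2,3) by simp
  finally show "ff p ds" unfolding ff_def by blast
next
  assume "ff p ds"
  then obtain u j v where e: "ds = u @ [p-3] @ replicate j (p-4) @ [p-3] @ v" by (auto simp: ff_def)
  have a1: "length u + j + 1 < length ds" using e by simp
  have a2: "ds ! length u = p - 3" using e by (simp add: nth_append)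
  have a3: "ds ! (length u + j + 1) = p - 3" using e by (simp add: nth_append)
  have a4: "\<forall>t. length u < t \<and> t < length u + j + 1 \<longrightarrow> ds ! t = p - 4"
    using e by (auto simp: nth_append)
  show "has_forbidden_factor p ds"
    unfolding has_forbidden_factor_def using a1 a2 a3 a4 by blast
qed


fun wv :: "nat \<Rightarrow> nat \<Rightarrow> nat list \<Rightarrow> int" where
  "wv p s [] = 0"
| "wv p s (x # xs) = int x * metallic p s + wv p (Suc s) xs"

fun pm :: "nat \<Rightarrow> nat \<Rightarrow> int" where
  "pm p 0 = 0"
| "pm p (Suc k) = metallic p k"

lemma m_rec: "metallic p (Suc k) = (int p - 2) * metallic p k - pm p k"
  by (cases k) auto

lemma m_grow: "p \<ge> 5 \<Longrightarrow> 1 \<le> metallic p k \<and> 2 * metallic p k \<le> metallic p (Suc k)"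
proof (induction k)
  case 0 then show ?case by simp
next
  case (Suc k)
  have a: "3 * metallic p (Suc k) \<le> (int p - 2) * metallic p (Suc k)"
    using Suc by (intro mult_right_mono) auto
  have e: "metallic p (Suc (Suc k)) = (int p - 2) * metallic p (Suc k) - metallic p k" by simp
  show ?case using Suc a e by linarith
qed

lemma m_pos: "p \<ge> 5 \<Longrightarrow> 1 \<le> metallic p k"
  using m_grow by blast

lemma m_step: "p \<ge> 5 \<Longrightarrow> metallic p k < metallic p (Suc k)"
  using m_grow[of p k] by auto

lemma m_mono: "p \<ge> 5 \<Longrightarrow> i \<le> j \<Longrightarrow> metallic p i \<le> metallic p j"
  using lift_Suc_mono_le[of "metallic p" i j] m_step by (meson less_imp_le)

lemma m_ge: "p \<ge> 5 \<Longrightarrow> int k < metallic p k"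
proof (induction k)
  case 0 then show ?case by simp
next
  case (Suc k) then show ?case using m_step[of p k] by simp
qed

lemma pm_le: assumes "p \<ge> 5" shows "0 \<le> pm p k \<and> pm p k \<le> metallic p k"
proof (cases k)
  case (Suc j) then show ?thesis using m_pos[of p j] m_step[of p j] assms by auto
qed auto

lemma wv_app: "wv p s (xs @ ys) = wv p s xs + wv p (s + length xs) ys"
  by (induction xs arbitrary: s) auto

lemma wv_snoc: "wv p 0 (xs @ [x]) = wv p 0 xs + int x * metallic p (length xs)"
  by (simp add: wv_app)

lemma wv_sum: "wv p s ds = (\<Sum>i<length ds. int (ds ! i) * metallic p (s + i))"
proof (induction ds arbitrary: s)
  case (Cons a ds)
  have "(\<Sum>i<length (a # ds). int ((a # ds) ! i) * metallic p (s + i)) =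
     int a * metallic p s + (\<Sum>i<length ds. int (ds ! i) * metallic p (Suc s + i))"
    by (simp only: length_Cons sum.lessThan_Suc_shift) simp
  then show ?case using Cons by simp
qed simp

lemma word_value_wv: "word_value p ds = wv p 0 ds"
  by (simp add: word_value_def wv_sum)

lemma wv_nonneg: "p \<ge> 5 \<Longrightarrow> 0 \<le> wv p s ds"
  by (induction ds arbitrary: s) (auto intro!: add_nonneg_nonneg simp: m_pos order_trans[OF _ m_pos])

lemma wv_rep0: "wv p s (replicate n 0 @ ys) = wv p (s + n) ys"
  by (induction n arbitrary: s) auto

definition valid :: "nat \<Rightarrow> nat list \<Rightarrow> bool" where
  "valid p xs \<longleftrightarrow> (\<forall>x\<in>set xs. x \<le> p - 3) \<and> \<not> ff p xs"

lemma bound: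
  assumes p: "p \<ge> 5"
  shows "valid p xs \<Longrightarrow> wv p 0 xs < metallic p (length xs) \<and>
     (\<not> ff p (xs @ [p-3]) \<longrightarrow> wv p 0 xs < metallic p (length xs) - pm p (length xs))"
proof (induction xs rule: rev_induct)
  case Nil then show ?case by simp
next
  case (snoc a xs)
  let ?n = "length xs" let ?m = "metallic p ?n"
  have v: "valid p xs" using snoc.prems ff_app_right by (auto simp: valid_def)
  have ad: "a \<le> p - 3" using snoc.prems by (auto simp: valid_def)
  have nf: "\<not> ff p (xs @ [a])" using snoc.prems by (auto simp: valid_def)
  note IH = snoc.IH[OF v]
  have pmle: "0 \<le> pm p ?n" "pm p ?n \<le> ?m" using pm_le[OF p] by auto
  have mr: "metallic p (Suc ?n) = (int p - 2) * ?m - pm p ?n" by (rule m_rec)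
  have mp: "0 < ?m" by (rule order_less_le_trans[OF zero_less_one m_pos[OF p]])
  have wvs: "wv p 0 (xs @ [a]) = wv p 0 xs + int a * ?m" by (rule wv_snoc)
  have part1: "wv p 0 (xs @ [a]) < metallic p (Suc ?n)"
  proof (cases "a = p - 3")
    case True
    then have "\<not> ff p (xs @ [p-3])" using nf by simp
    then have "wv p 0 xs < ?m - pm p ?n" using IH by blast
    then show ?thesis using wvs mr True p by (simp add: algebra_simps of_nat_diff)
  next
    case False
    then have "int a \<le> int p - 4" using ad p by auto
    then have "int a * ?m \<le> (int p - 4) * ?m" using mp by (intro mult_right_mono) auto
    then show ?thesis using wvs mr IH pmle by (simp add: algebra_simps)
  qed
  have part2: "\<not> ff p ((xs @ [a]) @ [p-3]) \<Longrightarrow>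
     wv p 0 (xs @ [a]) < metallic p (Suc ?n) - pm p (Suc ?n)"
  proof -
    assume h: "\<not> ff p ((xs @ [a]) @ [p-3])"
    have h2: "\<not> scd p (a # rev xs)" using h ff_snoc[of p "xs @ [a]" "p-3"] by simp
    then have an: "a \<noteq> p - 3" using p by simp
    show ?thesis
    proof (cases "a = p - 4")
      case True
      then have "\<not> scd p (rev xs)" using h2 p by simp
      then have "\<not> ff p (xs @ [p-3])" using v ff_snoc[of p xs "p-3"] by (simp add: valid_def)
      then have "wv p 0 xs < ?m - pm p ?n" using IH by blast
      then show ?thesis using wvs mr True p by (simp add: algebra_simps of_nat_diff)
    next
      case False
      then have "int a \<le> int p - 5" using ad an p by auto
      then have "int a * ?m \<le> (int p - 5) * ?m" using mp by (intro mult_right_mono) auto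
      then show ?thesis using wvs mr IH pmle by (simp add: algebra_simps)
    qed
  qed
  show ?case using part1 part2 by simp
qed


lemma exist:
  assumes p: "p \<ge> 5"
  shows "(\<forall>N. 0 \<le> N \<and> N < metallic p k \<longrightarrow> (\<exists>xs. length xs = k \<and> valid p xs \<and> wv p 0 xs = N)) \<and>
         (\<forall>N. 0 \<le> N \<and> N < metallic p k - pm p k \<longrightarrow>
            (\<exists>xs. length xs = k \<and> valid p xs \<and> \<not> ff p (xs @ [p-3]) \<and> wv p 0 xs = N))"
proof (induction k)
  case 0
  have "\<not> ff p [p-3]" by (simp add: ff_Cons)
  then show ?case by (auto simp: valid_def)
next
  case (Suc k)
  let ?m = "metallic p k"
  have mp: "0 < ?m" by (rule order_less_le_trans[OF zero_less_one m_pos[OF p]])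
  have mr: "metallic p (Suc k) = (int p - 2) * ?m - pm p k" by (rule m_rec)
  have pmle: "0 \<le> pm p k" "pm p k \<le> ?m" using pm_le[OF p] by auto
  have p3: "int (p - 3) = int p - 3" "int (p - 4) = int p - 4" using p by auto
  have gen: "\<exists>xs. length xs = Suc k \<and> valid p xs \<and> (\<not> ff p (xs @ [p-3]) \<or> \<not> P) \<and> wv p 0 xs = N"
    if N0: "0 \<le> N" and Nb: "N < (int p - 2) * ?m - pm p k"
      and PP: "P \<Longrightarrow> N < (int p - 3) * ?m - pm p k" for N P
  proof -
    define q where "q = N div ?m"
    define r where "r = N mod ?m"
    have Nqr: "N = q * ?m + r" unfolding q_def r_def by (rule div_mult_mod_eq[symmetric])
    have r0: "0 \<le> r" "r < ?m" unfolding r_def using mp by auto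
    have q0: "0 \<le> q" unfolding q_def using N0 mp by (simp add: div_int_pos_iff)
    have qm: "q * ?m < (int p - 2) * ?m" using Nqr r0 Nb pmle by linarith
    then have qb: "q < int p - 2" using mp by (simp add: mult_less_cancel_right)
    have qP: "P \<Longrightarrow> q < int p - 3"
    proof -
      assume P
      then have "q * ?m < (int p - 3) * ?m" using Nqr r0 PP pmle by linarith
      then show ?thesis using mp by (simp add: mult_less_cancel_right)
    qed
    define qn where "qn = nat q"
    have qn: "int qn = q" using q0 qn_def by simp
    show ?thesis
    proof (cases "q < int p - 4")
      case True
      obtain xs where xs: "length xs = k" "valid p xs" "wv p 0 xs = r"
        using Suc.IH r0 by blast
      have qnd: "qn \<noteq> p - 3" "qn \<noteq> p - 4" "qn \<le> p - 3" using True qn p3 by linarith+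
      have "valid p (xs @ [qn])" using xs(2) qnd by (auto simp: valid_def ff_snoc)
      moreover have "\<not> ff p (xs @ [qn, p-3])" using xs(2) qnd p by (auto simp: valid_def ff_snoc2 ff_snoc)
      moreover have "wv p 0 (xs @ [qn]) = N" using xs Nqr qn by (simp add: wv_snoc)
      ultimately show ?thesis using xs(1) by (intro exI[of _ "xs @ [qn]"]) auto
    next
      case False
      show ?thesis
      proof (cases "q = int p - 4")
        case True
        have qnd: "qn = p - 4" using True qn p3 by linarith
        show ?thesis
        proof (cases P)
          case PT: True
          have rb: "r < ?m - pm p k" using Nqr True PP[OF PT] r0 by (simp add: algebra_simps)
          obtain xs where xs: "length xs = k" "valid p xs" "\<not> ff p (xs @ [p-3])" "wv p 0 xs = r"
            using Suc.IH r0 rb by blast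
          have "\<not> scd p (rev xs)" using xs(3) by (simp add: ff_snoc)
          then have "valid p (xs @ [qn])" "\<not> ff p (xs @ [qn, p-3])" using xs(2) qnd p
            by (auto simp: valid_def ff_snoc2 ff_snoc)
          moreover have "wv p 0 (xs @ [qn]) = N" using xs Nqr qn by (simp add: wv_snoc)
          ultimately show ?thesis using xs(1) by (intro exI[of _ "xs @ [qn]"]) auto
        next
          case PF: False
          obtain xs where xs: "length xs = k" "valid p xs" "wv p 0 xs = r"
            using Suc.IH r0 by blast
          have "valid p (xs @ [qn])" using xs(2) qnd p by (auto simp: valid_def ff_snoc)
          moreover have "wv p 0 (xs @ [qn]) = N" using xs Nqr qn by (simp add: wv_snoc)
          ultimately show ?thesis using xs(1) PF by (intro exI[of _ "xs @ [qn]"]) auto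
        qed
      next
        case F2: False
        then have qd: "q = int p - 3" using False qb by linarith
        then have nP: "\<not> P" using qP by auto
        have rb: "r < ?m - pm p k" using Nqr qd Nb mr r0 by (simp add: algebra_simps)
        obtain xs where xs: "length xs = k" "valid p xs" "\<not> ff p (xs @ [p-3])" "wv p 0 xs = r"
          using Suc.IH r0 rb by blast
        have qnd: "qn = p - 3" using qd qn p3 by linarith
        have "valid p (xs @ [qn])" using xs(2,3) qnd by (auto simp: valid_def)
        moreover have "wv p 0 (xs @ [qn]) = N" using xs Nqr qn by (simp add: wv_snoc)
        ultimately show ?thesis using xs(1) nP by (intro exI[of _ "xs @ [qn]"]) auto
      qed
    qed
  qed
  show ?case
  proof (intro conjI allI impI)
    fix N assume "0 \<le> N \<and> N < metallic p (Suc k)"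
    then show "\<exists>xs. length xs = Suc k \<and> valid p xs \<and> wv p 0 xs = N"
      using gen[of N False] mr by auto
  next
    fix N assume "0 \<le> N \<and> N < metallic p (Suc k) - pm p (Suc k)"
    then have "0 \<le> N" "N < (int p - 3) * ?m - pm p k" using mr by (auto simp: algebra_simps)
    then show "\<exists>xs. length xs = Suc k \<and> valid p xs \<and> \<not> ff p (xs @ [p-3]) \<and> wv p 0 xs = N"
    proof -
      assume a: "0 \<le> N" "N < (int p - 3) * ?m - pm p k"
      have "N < (int p - 2) * ?m - pm p k" using a(2) mp by (simp add: algebra_simps)
      then show ?thesis using gen[of N True] a by auto
    qed
  qed
qed


lemma valid_snocD: "valid p (xs @ [x]) \<Longrightarrow> valid p xs"
  unfolding valid_def using ff_app_right[of p xs "[x]"] by auto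

lemma strip:
  assumes p: "p \<ge> 5"
  shows "valid p xs \<Longrightarrow> 0 < wv p 0 xs \<Longrightarrow>
    \<exists>ys. valid p ys \<and> ys \<noteq> [] \<and> last ys \<noteq> 0 \<and> wv p 0 ys = wv p 0 xs"
proof (induction xs rule: rev_induct)
  case Nil then show ?case by simp
next
  case (snoc x xs)
  show ?case
  proof (cases "x = 0")
    case True
    then have "wv p 0 (xs @ [x]) = wv p 0 xs" by (simp add: wv_snoc)
    moreover have "valid p xs" using snoc.prems(1) by (rule valid_snocD)
    ultimately show ?thesis using snoc.IH snoc.prems(2) by simp
  next
    case False then show ?thesis using snoc.prems by (intro exI[of _ "xs @ [x]"]) simp
  qed
qed

lemma same_len_unique:
  assumes p: "p \<ge> 5"
  shows "valid p a \<Longrightarrow> valid p b \<Longrightarrow> length a = length b \<Longrightarrow> wv p 0 a = wv p 0 b \<Longrightarrow> a = b"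
proof (induction a arbitrary: b rule: rev_induct)
  case Nil then show ?case by simp
next
  case (snoc x a)
  obtain b' y where b: "b = b' @ [y]" using snoc.prems(3)
    by (cases b rule: rev_exhaust) auto
  let ?n = "length a" let ?m = "metallic p ?n"
  have ln: "length b' = ?n" using b snoc.prems(3) by simp
  have va: "valid p a" "valid p b'" using snoc.prems(1,2) b valid_snocD by auto
  have ba: "wv p 0 a < ?m" "wv p 0 b' < ?m" using bound[OF p va(1)] bound[OF p va(2)] ln by auto
  have nn: "0 \<le> wv p 0 a" "0 \<le> wv p 0 b'" using wv_nonneg[OF p] by auto
  have eq: "wv p 0 a + int x * ?m = wv p 0 b' + int y * ?m"
    using snoc.prems(4) b ln by (simp add: wv_snoc)
  have mp: "0 < ?m" by (rule order_less_le_trans[OF zero_less_one m_pos[OF p]])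
  have xy: "x = y"
  proof (rule ccontr)
    assume "x \<noteq> y"
    then consider "x < y" | "y < x" by linarith
    then show False
    proof cases
      case 1
      then have "int (x + 1) * ?m \<le> int y * ?m" using mp by (intro mult_right_mono) auto
      then show False using eq ba nn by (simp add: algebra_simps)
    next
      case 2
      then have "int (y + 1) * ?m \<le> int x * ?m" using mp by (intro mult_right_mono) auto
      then show False using eq ba nn by (simp add: algebra_simps)
    qed
  qed
  then have "wv p 0 a = wv p 0 b'" using eq by simp
  then have "a = b'" using snoc.IH va ln by simp
  then show ?case using b xy by simp
qed

lemma len_bounds:
  assumes p: "p \<ge> 5" and v: "valid p a" and ne: "a \<noteq> []" and l: "last a \<noteq> 0"
  shows "metallic p (length a - 1) \<le> wv p 0 a" "wv p 0 a < metallic p (length a)"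
proof -
  show "wv p 0 a < metallic p (length a)" using bound[OF p v] by simp
  obtain a' x where a: "a = a' @ [x]" using ne rev_exhaust by blast
  have "x \<ge> 1" using l a by simp
  then have "metallic p (length a') \<le> int x * metallic p (length a')"
    using m_pos[OF p, of "length a'"] by (simp add: mult_le_cancel_right1)
  then show "metallic p (length a - 1) \<le> wv p 0 a"
    using a wv_nonneg[OF p, of 0 a'] by (simp add: wv_snoc)
qed

lemma code_iff: "is_metallic_code p ds \<longleftrightarrow> ds \<noteq> [] \<and> last ds \<noteq> 0 \<and> valid p ds"
  by (auto simp: is_metallic_code_def valid_def hff_ff)

lemma code_unique:
  assumes p: "p \<ge> 5" and a: "is_metallic_code p a" and b: "is_metallic_code p b"
    and e: "word_value p a = word_value p b"
  shows "a = b"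
proof -
  have A: "valid p a" "a \<noteq> []" "last a \<noteq> 0" using a by (auto simp: code_iff)
  have B: "valid p b" "b \<noteq> []" "last b \<noteq> 0" using b by (auto simp: code_iff)
  have e': "wv p 0 a = wv p 0 b" using e by (simp add: word_value_wv)
  have "length a = length b"
  proof (rule ccontr)
    assume "length a \<noteq> length b"
    then consider "length a < length b" | "length b < length a" by linarith
    then show False
    proof cases
      case 1
      then have "metallic p (length a) \<le> metallic p (length b - 1)" by (intro m_mono[OF p]) auto
      then show False using len_bounds[OF p A(1-3)] len_bounds[OF p B(1-3)] e' by linarith
    next
      case 2
      then have "metallic p (length b) \<le> metallic p (length a - 1)" by (intro m_mono[OF p]) auto
      then show False using len_bounds[OF p A(1-3)] len_bounds[OF p B(1-3)] e' by linarith
    qed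
  qed
  then show ?thesis using same_len_unique[OF p A(1) B(1)] e' by simp
qed

lemma code_exists:
  assumes p: "p \<ge> 5" and N: "1 \<le> N"
  shows "\<exists>ds. is_metallic_code p ds \<and> word_value p ds = N"
proof -
  have "N < metallic p (nat N)" using m_ge[OF p, of "nat N"] N by simp
  moreover have "0 \<le> N" using N by simp
  ultimately have "\<exists>xs. length xs = nat N \<and> valid p xs \<and> wv p 0 xs = N"
    using conjunct1[OF exist[OF p, of "nat N"]] by blast
  then obtain xs where xs: "valid p xs" "wv p 0 xs = N" by blast
  then obtain ys where "valid p ys" "ys \<noteq> []" "last ys \<noteq> 0" "wv p 0 ys = N"
    using strip[OF p xs(1)] N by auto
  then show ?thesis by (auto simp: code_iff word_value_wv)
qed

lemma code_is:
  assumes p: "p \<ge> 5" and N: "1 \<le> N"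
  shows "is_metallic_code p (metallic_code p N) \<and> word_value p (metallic_code p N) = N"
proof -
  obtain ds where ds: "is_metallic_code p ds \<and> word_value p ds = N" using code_exists[OF p N] by blast
  have "\<exists>!ds. is_metallic_code p ds \<and> word_value p ds = N"
  proof (rule ex1I[of _ ds])
    show "is_metallic_code p ds \<and> word_value p ds = N" by (rule ds)
    fix y assume "is_metallic_code p y \<and> word_value p y = N"
    then show "y = ds" using ds code_unique[OF p, of y ds] by simp
  qed
  then show ?thesis unfolding metallic_code_def by (rule theI')
qed

lemma code_eq:
  assumes p: "p \<ge> 5" and ds: "is_metallic_code p ds" "word_value p ds = N"
  shows "metallic_code p N = ds"
  unfolding metallic_code_def
proof (rule the_equality)
  show "is_metallic_code p ds \<and> word_value p ds = N" using ds by simp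
  fix y assume "is_metallic_code p y \<and> word_value p y = N"
  then show "y = ds" using ds code_unique[OF p, of y ds] by simp
qed


fun inc :: "nat list \<Rightarrow> nat list" where
  "inc [] = [1]"
| "inc (x # xs) = Suc x # xs"

lemma wv_inc: "wv p s (inc v) = metallic p s + wv p s v"
  by (cases v) (auto simp: algebra_simps)

lemma wv_dcd: "wv p 0 ((p-3) # replicate j (p-4)) = metallic p (Suc j) - metallic p j"
  if p: "p \<ge> 5" for j
proof (induction j)
  case 0 then show ?case using p by simp
next
  case (Suc j)
  have "wv p 0 ((p-3) # replicate (Suc j) (p-4)) = wv p 0 (((p-3) # replicate j (p-4)) @ [p-4])"
    by (simp add: replicate_append_same[symmetric])
  also have "\<dots> = metallic p (Suc j) - metallic p j + int (p-4) * metallic p (Suc j)"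
    by (simp only: wv_snoc Suc) simp
  also have "\<dots> = metallic p (Suc (Suc j)) - metallic p (Suc j)"
    using p by (simp add: algebra_simps of_nat_diff)
  finally show ?case .
qed

lemma wv_dcd2: "wv p 0 ((p-3) # replicate j (p-4) @ [p-3]) = metallic p (Suc (Suc j))"
  if p: "p \<ge> 5" for j
proof -
  have "wv p 0 ((p-3) # replicate j (p-4) @ [p-3]) = wv p 0 (((p-3) # replicate j (p-4)) @ [p-3])"
    by simp
  also have "\<dots> = metallic p (Suc j) - metallic p j + int (p-3) * metallic p (Suc j)"
    by (simp only: wv_snoc wv_dcd[OF p]) simp
  also have "\<dots> = metallic p (Suc (Suc j))"
    using p by (simp add: algebra_simps of_nat_diff)
  finally show ?thesis .
qed

lemma pick:
  fixes \<mu> \<nu> z :: int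
  assumes "\<mu> < \<nu>" "E \<nu>" "\<forall>x. \<mu> < x \<and> x < \<nu> \<longrightarrow> \<not> E x"
    "E z" "\<mu> < z" "\<forall>x. \<mu> < x \<and> x < z \<longrightarrow> \<not> E x"
  shows "\<nu> = z"
  using assms by (metis linorder_neqE)


theorem lemma4:
  fixes p n :: nat and \<mu> \<nu> :: int
  assumes "p \<ge> 5"
    and "\<mu> \<in> level p n" and "\<nu> \<in> level p n" and "\<mu> < \<nu>"
    and "code_ends_with_0 p \<mu>" and "code_ends_with_0 p \<nu>"
    and "\<forall>x. \<mu> < x \<and> x < \<nu> \<longrightarrow> \<not> code_ends_with_0 p x"
  shows "(\<nu> - \<mu> = int p - 3 \<longleftrightarrow> code_ends_with_00 p \<nu>)
         \<and> (\<not> code_ends_with_00 p \<nu> \<longrightarrow> \<nu> - \<mu> = int p - 2)"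
proof -
  have p: "p \<ge> 5" by (rule assms(1))
  have p3: "int (p - 3) = int p - 3" "int (p - 4) = int p - 4" using p by auto
  have "0 \<le> Mprev p n" unfolding Mprev_def using m_pos[OF p] by (intro sum_nonneg) (auto intro: order_trans[OF zero_le_one])
  then have mu1: "1 \<le> \<mu>" using assms(2) by (auto simp: level_def)
  define a where "a = metallic_code p \<mu>"
  have ca: "is_metallic_code p a" "word_value p a = \<mu>" using code_is[OF p mu1] a_def by auto
  have a0: "a \<noteq> []" "a ! 0 = 0" using assms(5) a_def by (auto simp: code_ends_with_0_def Let_def)
  then obtain w where aw: "a = 0 # w" by (cases a) auto
  have va: "valid p a" "last a \<noteq> 0" using ca(1) by (auto simp: code_iff)
  have wne: "w \<noteq> []" using va(2) aw by auto
  have lw: "last w \<noteq> 0" using va(2) aw wne by simp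
  have dw: "\<forall>y\<in>set w. y \<le> p - 3" using va(1) aw by (auto simp: valid_def)
  have fw: "\<not> ff p w" using va(1) aw by (auto simp: valid_def ff_Cons)
  have muw: "\<mu> = wv p 1 w" using ca(2) aw by (simp add: word_value_wv)
  have shift: "metallic_code p (\<mu> + int k) = k # w"
    if k: "k \<le> p - 3" "\<not> (k = p - 3 \<and> scd p w)" for k
  proof (rule code_eq[OF p])
    show "is_metallic_code p (k # w)" using k wne lw dw fw by (auto simp: code_iff valid_def ff_Cons)
    show "word_value p (k # w) = \<mu> + int k" using muw by (simp add: word_value_wv)
  qed
  have notE: "\<not> code_ends_with_0 p x"
    if x: "\<mu> < x" "x \<le> \<mu> + int (p - 3)" "x \<noteq> \<mu> + int (p - 3) \<or> \<not> scd p w" for x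
  proof -
    define k where "k = nat (x - \<mu>)"
    have xk: "x = \<mu> + int k" "1 \<le> k" "k \<le> p - 3" using x unfolding k_def by auto
    have "\<not> (k = p - 3 \<and> scd p w)" using x xk by auto
    then have "metallic_code p x = k # w" using shift xk by simp
    then show ?thesis using xk by (simp add: code_ends_with_0_def)
  qed
  show ?thesis
  proof (cases "scd p w")
    case True
    then obtain j v where wjv: "w = replicate j (p-4) @ (p-3) # v" by (auto simp: scd_def)
    have "\<not> ff p ((p-3) # v)" using fw wjv ff_app_left[of p "(p-3) # v" "replicate j (p-4)"] by auto
    then have fv: "\<not> ff p v" "\<not> scd p v" by (auto simp: ff_Cons)
    define b where "b = replicate (Suc (Suc j)) 0 @ inc v"
    have fb: "ff p b \<longleftrightarrow> ff p (inc v)" unfolding b_def by (rule ff_rep0[OF p])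
    have cb: "is_metallic_code p b"
    proof (cases v)
      case Nil
      have "\<not> ff p [1]" using p by (simp add: ff_Cons)
      then have "\<not> ff p b" using fb Nil by simp
      then show ?thesis using Nil p unfolding b_def by (auto simp: code_iff valid_def)
    next
      case (Cons x xs)
      have x: "x \<noteq> p - 3" "\<not> (x = p - 4 \<and> scd p xs)" "\<not> ff p xs" using fv Cons p by (auto simp: ff_Cons)
      have dx: "x \<le> p - 3" "\<forall>y\<in>set xs. y \<le> p - 3" using dw wjv Cons by auto
      have "\<not> ff p (Suc x # xs)" using x p by (auto simp: ff_Cons)
      moreover have "last (Suc x # xs) \<noteq> 0" using lw wjv Cons by (cases "xs = []") auto
      moreover have "\<not> ff p b" using fb Cons calculation(1) by simp
      ultimately show ?thesis using Cons p x dx unfolding b_def by (auto simp: code_iff valid_def)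
    qed
    have "wv p 0 b = metallic p (Suc (Suc j)) + wv p (Suc (Suc j)) v"
      unfolding b_def by (simp add: wv_rep0 wv_inc)
    also have "\<dots> = \<mu> + int (p - 3)"
    proof -
      have "\<mu> = wv p 0 ((0 # replicate j (p-4) @ [p-3]) @ v)" using muw wjv by simp
      also have "\<dots> = wv p 1 (replicate j (p-4) @ [p-3]) + wv p (Suc (Suc j)) v"
        by (simp add: wv_app)
      finally have "\<mu> + int (p-3) = wv p 0 ((p-3) # replicate j (p-4) @ [p-3]) + wv p (Suc (Suc j)) v"
        by simp
      then show ?thesis using wv_dcd2[OF p, of j] by linarith
    qed
    finally have "metallic_code p (\<mu> + int (p - 3)) = b"
      using code_eq[OF p cb] by (simp add: word_value_wv)
    then have Ez: "code_ends_with_0 p (\<mu> + int (p - 3))" "code_ends_with_00 p (\<mu> + int (p - 3))"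
      unfolding b_def by (auto simp: code_ends_with_0_def code_ends_with_00_def nth_append)
    have "\<nu> = \<mu> + int (p - 3)"
    proof (rule pick[where E="code_ends_with_0 p"])
      show "\<forall>x. \<mu> < x \<and> x < \<mu> + int (p - 3) \<longrightarrow> \<not> code_ends_with_0 p x"
      proof (intro allI impI)
        fix x assume "\<mu> < x \<and> x < \<mu> + int (p - 3)"
        then show "\<not> code_ends_with_0 p x" using notE[of x] by simp
      qed
    qed (use assms Ez p in auto)
    then show ?thesis using Ez p3 by simp
  next
    case False
    obtain x xs where wx: "w = x # xs" using wne by (cases w) auto
    have x: "x \<noteq> p - 3" "\<not> (x = p - 4 \<and> scd p xs)" using False wx p by auto
    have fxs: "\<not> ff p xs" using fw wx by (simp add: ff_Cons)
    define b where "b = 0 # Suc x # xs"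
    have cb: "is_metallic_code p b"
    proof -
      have dx: "x \<le> p - 3" "\<forall>y\<in>set xs. y \<le> p - 3" using dw wx by auto
      have "\<not> ff p (Suc x # xs)" using x p fxs by (auto simp: ff_Cons)
      moreover have "last (Suc x # xs) \<noteq> 0" using lw wx by (cases "xs = []") auto
      ultimately show ?thesis using p x dx unfolding b_def by (auto simp: code_iff valid_def ff_Cons)
    qed
    have "wv p 0 b = \<mu> + (int p - 2)"
      unfolding b_def using muw wx by (simp add: algebra_simps)
    then have "metallic_code p (\<mu> + (int p - 2)) = b"
      using code_eq[OF p cb] by (simp add: word_value_wv)
    then have Ez: "code_ends_with_0 p (\<mu> + (int p - 2))" "\<not> code_ends_with_00 p (\<mu> + (int p - 2))"
      unfolding b_def by (auto simp: code_ends_with_0_def code_ends_with_00_def)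
    have "\<nu> = \<mu> + (int p - 2)"
    proof (rule pick[where E="code_ends_with_0 p"])
      show "\<forall>x. \<mu> < x \<and> x < \<mu> + (int p - 2) \<longrightarrow> \<not> code_ends_with_0 p x"
      proof (intro allI impI)
        fix x assume "\<mu> < x \<and> x < \<mu> + (int p - 2)"
        then show "\<not> code_ends_with_0 p x" using notE[of x] False p3 by simp
      qed
    qed (use assms Ez p in auto)
    then show ?thesis using Ez p3 by simp
  qed
qed

end
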